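(* There are constants $C\in(0,\infty)$ and $c\in(0,1)$ such that for all $N,k\in\mathbb N$ and all $n\in\mathbb N$ with $n\le N$, $$\P(\tau^{(N)}_k=n)\le C\,k\,\P(T^{(N)}_1=n)\,\P(T^{(N)}_1\le n)^{k-1}\exp\Big(-\frac{ck}{\log n+1}\log^+\frac{ck}{\log n+1}\Big),$$ where $\log^+x:=\max(\log x,0)$.
   Context: Fix positive reals $r(n)$, $n\in\mathbb N$, with $r(n)=\frac an(1+o(1))$ as $n\to\infty$ for some $a\in(0,\infty)$; $R_N:=\sum_{n=1}^Nr(n)$. For each $N$, $(T^{(N)}_i)_{i\ge1}$ are i.i.d. with $\P(T^{(N)}_i=n)=\frac{r(n)}{R_N}\mathbf 1_{\{1,\dots,N\}}(n)$, and $\tau^{(N)}_k=\sum_{i=1}^kT^{(N)}_i$. *)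

theory Defs
  imports "HOL-Probability.Probability" "HOL-Library.Landau_Symbols"
begin

definition RN :: "(nat \<Rightarrow> real) \<Rightarrow> nat \<Rightarrow> real" where
  "RN r N = (\<Sum>n=1..N. r n)"

definition T_pmf :: "(nat \<Rightarrow> real) \<Rightarrow> nat \<Rightarrow> nat pmf" where
  "T_pmf r N = embed_pmf (\<lambda>n. if n \<in> {1..N} then r n / RN r N else 0)"

primrec tau_pmf :: "(nat \<Rightarrow> real) \<Rightarrow> nat \<Rightarrow> nat \<Rightarrow> nat pmf" where
  "tau_pmf r N 0 = return_pmf 0"
| "tau_pmf r N (Suc k) =
     bind_pmf (tau_pmf r N k) (\<lambda>s. map_pmf (\<lambda>t. s + t) (T_pmf r N))"

definition logplus :: "real \<Rightarrow> real" where
  "logplus x = max (ln x) 0"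

end

theory Submission
  imports Defs "HOL-Computational_Algebra.Polynomial"
begin

lemma r_bounds:
  fixes r :: "nat \<Rightarrow> real" and a :: real
  assumes a_pos: "0 < a"
    and r_pos: "\<And>n. n \<ge> 1 \<Longrightarrow> 0 < r n"
    and r_asymp: "r \<sim>[at_top] (\<lambda>n. a / real n)"
  shows "\<exists>A1 A2. 0 < A1 \<and> (\<forall>t\<ge>1. A1 \<le> real t * r t \<and> real t * r t \<le> A2)"
proof -
  have ev: "eventually (\<lambda>n. r n \<noteq> 0 \<or> a / real n \<noteq> 0) at_top"
    using eventually_ge_at_top[of "1::nat"] by eventually_elim (use a_pos in auto)
  have lim: "((\<lambda>n. r n / (a / real n)) \<longlongrightarrow> 1) at_top"
    using asymp_equivD_strong[OF r_asymp ev] .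
  have "eventually (\<lambda>n. r n / (a / real n) > 1/2) at_top"
    using order_tendstoD(1)[OF lim, of "1/2"] by simp
  moreover have "eventually (\<lambda>n. r n / (a / real n) < 2) at_top"
    using order_tendstoD(2)[OF lim, of "2"] by simp
  moreover have "eventually (\<lambda>n. n \<ge> (1::nat)) at_top" by (rule eventually_ge_at_top)
  ultimately have "eventually (\<lambda>n. a/2 < real n * r n \<and> real n * r n < 2*a) at_top"
  proof eventually_elim
    case (elim n)
    then have e: "r n / (a / real n) = real n * r n / a" using a_pos by (simp add: field_simps)
    show ?case using elim a_pos unfolding e by (auto simp: field_simps)
  qed
  then obtain n0 where n0: "\<And>n. n \<ge> n0 \<Longrightarrow> a/2 < real n * r n \<and> real n * r n < 2*a"
    by (auto simp: eventually_at_top_linorder)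
  define A2 where "A2 = 2*a + (\<Sum>t<n0. real t * r t)"
  define A1 where "A1 = Min (insert (a/2) ((\<lambda>t. real t * r t) ` {1..n0}))"
  have pos: "t \<ge> 1 \<Longrightarrow> 0 < real t * r t" for t using r_pos[of t] by auto
  have nn: "0 \<le> real t * r t" for t using pos[of t] by (cases "t = 0") auto
  have A1pos: "0 < A1" unfolding A1_def using a_pos pos by (subst Min_gr_iff) auto
  have "A1 \<le> real t * r t \<and> real t * r t \<le> A2" if t: "t \<ge> 1" for t
  proof
    show "A1 \<le> real t * r t"
    proof (cases "t \<le> n0")
      case True then show ?thesis unfolding A1_def using t by (intro Min_le) auto
    next
      case False
      have "A1 \<le> a/2" unfolding A1_def by (intro Min_le) auto
      with n0[of t] False show ?thesis by auto
    qed
    have s0: "0 \<le> (\<Sum>t<n0. real t * r t)"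
      by (intro sum_nonneg nn)
    show "real t * r t \<le> A2"
    proof (cases "t < n0")
      case True
      have "real t * r t \<le> (\<Sum>t<n0. real t * r t)"
        by (rule member_le_sum) (use True nn in auto)
      then show ?thesis unfolding A2_def using a_pos by linarith
    next
      case False then show ?thesis using n0[of t] s0 unfolding A2_def by auto
    qed
  qed
  then show ?thesis using A1pos by blast
qed

lemma RN_pos:
  assumes r_pos: "\<And>n. n \<ge> 1 \<Longrightarrow> 0 < r n" and N: "1 \<le> N"
  shows "0 < RN r N"
proof -
  have "0 < r 1" using r_pos by auto
  also have "r 1 \<le> (\<Sum>n=1..N. r n)"
    by (rule member_le_sum) (use N r_pos in \<open>auto intro: less_imp_le\<close>)
  finally show ?thesis unfolding RN_def .
qed

lemma pmf_T:
  assumes r_pos: "\<And>n. n \<ge> 1 \<Longrightarrow> 0 < r n" and N: "1 \<le> N"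
  shows "pmf (T_pmf r N) t = (if t \<in> {1..N} then r t / RN r N else 0)"
  unfolding T_pmf_def
proof (rule pmf_embed_pmf)
  have R: "0 < RN r N" using RN_pos[OF r_pos N] .
  show "0 \<le> (if x \<in> {1..N} then r x / RN r N else 0)" for x
    using R r_pos[of x] by auto
  have "(\<integral>\<^sup>+ x. ennreal (if x \<in> {1..N} then r x / RN r N else 0) \<partial>count_space UNIV)
      = (\<Sum>x\<in>{1..N}. ennreal (if x \<in> {1..N} then r x / RN r N else 0))"
    by (rule nn_integral_count_space') auto
  also have "\<dots> = ennreal (\<Sum>x\<in>{1..N}. r x / RN r N)"
    by (subst sum_ennreal[symmetric]) (use R r_pos in \<open>auto intro: less_imp_le\<close>)
  also have "(\<Sum>x\<in>{1..N}. r x / RN r N) = 1"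
    using R by (simp add: sum_divide_distrib[symmetric] RN_def)
  finally show "(\<integral>\<^sup>+ x. ennreal (if x \<in> {1..N} then r x / RN r N else 0) \<partial>count_space UNIV) = 1"
    by simp
qed

lemma pmf_tau_Suc:
  "pmf (tau_pmf r N (Suc k)) m = (\<Sum>s\<le>m. pmf (tau_pmf r N k) s * pmf (T_pmf r N) (m - s))"
proof -
  have h: "pmf (map_pmf (\<lambda>t. s + t) (T_pmf r N)) m = (if s \<le> m then pmf (T_pmf r N) (m - s) else 0)" for s
  proof -
    have "(\<lambda>t. s + t) -` {m} = (if s \<le> m then {m - s} else {})" by auto
    then show ?thesis by (simp add: pmf_map measure_pmf_single)
  qed
  have "pmf (tau_pmf r N (Suc k)) m = (\<integral>s. (if s \<le> m then pmf (T_pmf r N) (m - s) else 0) \<partial>measure_pmf (tau_pmf r N k))"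
    by (simp add: pmf_bind h)
  also have "\<dots> = (\<Sum>s\<in>{..m}. (if s \<le> m then pmf (T_pmf r N) (m - s) else 0) * pmf (tau_pmf r N k) s)"
    by (rule integral_measure_pmf_real) (auto split: if_splits)
  finally show ?thesis by (simp add: mult.commute)
qed

definition Pn :: "(nat \<Rightarrow> real) \<Rightarrow> nat \<Rightarrow> nat \<Rightarrow> real poly" where
  "Pn r N n = (\<Sum>t\<in>{1..n}. monom (r t / RN r N) t)"

lemma coeff_Pn: "coeff (Pn r N n) t = (if t \<in> {1..n} then r t / RN r N else 0)"
  unfolding Pn_def coeff_sum coeff_monom by (simp add: sum.delta)

lemma poly_Pn: "poly (Pn r N n) z = (\<Sum>t\<in>{1..n}. r t / RN r N * z ^ t)"
  unfolding Pn_def by (simp add: poly_sum poly_monom)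

lemma tau_coeff:
  assumes r_pos: "\<And>n. n \<ge> 1 \<Longrightarrow> 0 < r n" and N: "1 \<le> N" and nN: "n \<le> N"
  shows "m \<le> n \<Longrightarrow> pmf (tau_pmf r N k) m = coeff (Pn r N n ^ k) m"
proof (induction k arbitrary: m)
  case 0
  then show ?case by (simp add: indicator_def)
next
  case (Suc k)
  have "pmf (tau_pmf r N (Suc k)) m = (\<Sum>s\<le>m. pmf (tau_pmf r N k) s * pmf (T_pmf r N) (m - s))"
    by (rule pmf_tau_Suc)
  also have "\<dots> = (\<Sum>s\<le>m. coeff (Pn r N n ^ k) s * coeff (Pn r N n) (m - s))"
    by (intro sum.cong refl) (use Suc nN in \<open>auto simp: pmf_T[OF r_pos N] coeff_Pn\<close>)
  also have "\<dots> = coeff (Pn r N n ^ Suc k) m"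
    by (simp only: power_Suc2 coeff_mult)
  finally show ?case .
qed

lemma coeff_pow_nonneg:
  fixes P :: "real poly"
  assumes "\<And>i. 0 \<le> coeff P i"
  shows "0 \<le> coeff (P ^ k) m"
proof (induction k arbitrary: m)
  case 0 then show ?case by simp
next
  case (Suc k)
  show ?case unfolding power_Suc coeff_mult
    by (intro sum_nonneg mult_nonneg_nonneg assms Suc)
qed

lemma coeff_pow_low:
  fixes P :: "real poly"
  assumes "coeff P 0 = 0"
  shows "m < k \<Longrightarrow> coeff (P ^ k) m = 0"
proof (induction k arbitrary: m)
  case 0 then show ?case by simp
next
  case (Suc k)
  have "coeff (P ^ k * P) m = 0" unfolding coeff_mult
  proof (intro sum.neutral ballI)
    fix i assume i: "i \<in> {..m}"
    show "coeff (P ^ k) i * coeff P (m - i) = 0"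
    proof (cases "i < k")
      case True then show ?thesis using Suc.IH by simp
    next
      case False then have "m - i = 0" using Suc.prems by simp
      then show ?thesis using assms by simp
    qed
  qed
  then show ?case by (simp only: power_Suc2)
qed

lemma size_bias:
  fixes P :: "real poly"
  assumes n: "1 \<le> n"
  shows "real n * coeff (P ^ Suc j) n
       = real (Suc j) * (\<Sum>i\<le>n-1. coeff (P ^ j) i * (real (n - i) * coeff P (n - i)))"
proof -
  have "real n * coeff (P ^ Suc j) n = coeff (pderiv (P ^ Suc j)) (n - 1)"
    using n by (simp add: coeff_pderiv)
  also have "\<dots> = real (Suc j) * coeff (P ^ j * pderiv P) (n - 1)"
    by (simp only: pderiv_power_Suc mult_smult_left coeff_smult)
  also have "coeff (P ^ j * pderiv P) (n - 1) = (\<Sum>i\<le>n-1. coeff (P ^ j) i * (real (n - i) * coeff P (n - i)))"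
    unfolding coeff_mult
  proof (intro sum.cong refl)
    fix i assume "i \<in> {..n-1}"
    then have "Suc (n - 1 - i) = n - i" using n by auto
    then show "coeff (P ^ j) i * coeff (pderiv P) (n - 1 - i) = coeff (P ^ j) i * (real (n - i) * coeff P (n - i))"
      by (simp add: coeff_pderiv)
  qed
  finally show ?thesis .
qed

lemma sum_le_poly:
  fixes Q :: "real poly"
  assumes nn: "\<And>i. 0 \<le> coeff Q i" and z: "0 < z" "z \<le> 1"
  shows "(\<Sum>i\<le>n. coeff Q i) \<le> poly Q z / z ^ n"
proof -
  have "(\<Sum>i\<le>n. coeff Q i) * z ^ n \<le> (\<Sum>i\<le>n. coeff Q i * z ^ i)"
    unfolding sum_distrib_right
    by (intro sum_mono mult_left_mono nn power_decreasing) (use z in auto)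
  also have "(\<Sum>i\<le>n. coeff Q i * z ^ i) = (\<Sum>i\<in>{..n} \<inter> {..degree Q}. coeff Q i * z ^ i)"
    by (rule sum.mono_neutral_right) (auto simp: coeff_eq_0)
  also have "\<dots> \<le> (\<Sum>i\<le>degree Q. coeff Q i * z ^ i)"
    by (rule sum_mono2) (use nn z in auto)
  also have "\<dots> = poly Q z" by (simp add: poly_altdef)
  finally show ?thesis using z by (simp add: field_simps)
qed

lemma harm_upper:
  "1 \<le> n \<Longrightarrow> (\<Sum>t=1..n. 1 / real t) \<le> ln (real n) + 1"
proof (induction n rule: dec_induct)
  case base then show ?case by simp
next
  case (step n)
  have "ln (real n / real (Suc n)) \<le> real n / real (Suc n) - 1"
    by (rule ln_le_minus_one) (use step in auto)
  also have "\<dots> = - 1 / real (Suc n)" by (simp add: field_simps)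
  finally have "1 / real (Suc n) \<le> ln (real (Suc n)) - ln (real n)"
    using step by (simp add: ln_div)
  then show ?case using step by simp
qed

lemma harm_lower:
  assumes a: "1 \<le> a"
  shows "a \<le> n + 1 \<Longrightarrow> ln (real (n + 1) / real a) \<le> (\<Sum>t=a..n. 1 / real t)"
proof (induction n)
  case 0 then have "a = 1" using a by auto
  then show ?case by simp
next
  case (Suc n)
  show ?case
  proof (cases "a = Suc n + 1")
    case True then show ?thesis by simp
  next
    case False
    then have an: "a \<le> n + 1" using Suc by simp
    have "ln (1 + 1 / real (Suc n)) \<le> 1 / real (Suc n)" by (rule ln_add_one_self_le_self) simp
    moreover have "ln (1 + 1 / real (Suc n)) = ln (real (Suc n + 1)) - ln (real (n+1))"
    proof -
      have "1 + 1 / real (Suc n) = real (Suc n + 1) / real (n+1)" by (simp add: field_simps)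
      then show ?thesis by (simp add: ln_div del: of_nat_Suc of_nat_add)
    qed
    moreover have "ln (real (Suc n + 1) / real a) = ln (real (Suc n + 1)) - ln (real a)"
      using a by (simp add: ln_div)
    moreover have "ln (real (n + 1) / real a) = ln (real (n + 1)) - ln (real a)"
      using a by (simp add: ln_div)
    moreover have "(\<Sum>t=a..Suc n. 1 / real t) = (\<Sum>t=a..n. 1 / real t) + 1 / real (Suc n)"
      using an by simp
    ultimately show ?thesis using Suc.IH[OF an] by linarith
  qed
qed

lemma exponent_bound:
  fixes x y \<sigma> :: real
  assumes x: "1 \<le> x" and y: "exp 3 * x \<le> y" and s: "y / 2 \<le> \<sigma>" "\<sigma> \<le> y"
  shows "\<sigma> - y * ln \<sigma> \<le> - x * ln x"
proof -
  have xpos: "0 < x" using x by simp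
  have "0 < exp 3 * x" using xpos by simp
  then have ypos: "0 < y" using y by linarith
  have lx: "0 \<le> ln x" using x by simp
  have "ln (y / 2) \<le> ln \<sigma>" using s ypos by simp
  then have ls: "ln y - ln 2 \<le> ln \<sigma>" using ypos by (simp add: ln_div)
  have "ln (exp 3 * x) \<le> ln y" using y xpos ypos by (subst ln_le_cancel_iff) auto
  then have ly: "3 + ln x \<le> ln y" using xpos by (simp add: ln_mult)
  have l2: "ln 2 < (1::real)" using ln_2_less_1 .
  have "y * (ln y - ln 2) \<le> y * ln \<sigma>" using ls ypos by (intro mult_left_mono) auto
  then have "\<sigma> - y * ln \<sigma> \<le> y - y * (ln y - ln 2)"
    using s by linarith
  also have "\<dots> = y * (1 + ln 2 - ln y)" by (simp add: algebra_simps)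
  also have "\<dots> \<le> y * (- ln x)"
    using ly l2 ypos by (intro mult_left_mono) auto
  also have "\<dots> \<le> x * (- ln x)"
  proof -
    have "1 * x \<le> exp 3 * x" using xpos by (intro mult_right_mono) auto
    then have "x \<le> y" using y by linarith
    then show ?thesis using lx by (intro mult_right_mono_neg) auto
  qed
  finally show ?thesis by simp
qed

lemma psi_bound:
  fixes w :: "nat \<Rightarrow> real"
  assumes nn: "\<And>t. 1 \<le> t \<Longrightarrow> 0 \<le> w t" and a: "1 \<le> a" "a \<le> n"
  shows "(\<Sum>t\<in>{1..n}. w t * exp (- 1 / real a) ^ t)
       \<le> (\<Sum>t\<in>{1..n}. w t) - (1 - exp (-1)) * (\<Sum>t=a..n. w t)"
proof -
  define e where "e = exp (- 1 / real a)"
  define e1 where "e1 = exp (-1::real)"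
  have split: "{1..n} = {1..<a} \<union> {a..n}" using a by auto
  have d: "{1..<a} \<inter> {a..n} = {}" by auto
  have s1: "(\<Sum>t\<in>{1..n}. w t * e ^ t)
     = (\<Sum>t\<in>{1..<a}. w t * e ^ t) + (\<Sum>t\<in>{a..n}. w t * e ^ t)"
    unfolding split by (rule sum.union_disjoint) (use d in auto)
  have s2: "(\<Sum>t\<in>{1..<a}. w t * e ^ t) \<le> (\<Sum>t\<in>{1..<a}. w t)"
  proof (intro sum_mono)
    fix t assume "t \<in> {1..<a}"
    then show "w t * e ^ t \<le> w t"
      using nn[of t] unfolding e_def by (intro mult_left_le power_le_one) auto
  qed
  have s3: "(\<Sum>t\<in>{a..n}. w t * e ^ t) \<le> (\<Sum>t\<in>{a..n}. w t * e1)"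
  proof (intro sum_mono mult_left_mono)
    fix t assume t: "t \<in> {a..n}"
    then show "0 \<le> w t" using a nn by auto
    have "e ^ t = exp (real t * (- 1 / real a))" unfolding e_def by (simp add: exp_of_nat_mult[symmetric])
    also have "\<dots> \<le> exp (-1)" using t a by (simp add: field_simps)
    finally show "e ^ t \<le> e1" unfolding e1_def .
  qed
  have s4: "(\<Sum>t\<in>{1..n}. w t) = (\<Sum>t\<in>{1..<a}. w t) + (\<Sum>t\<in>{a..n}. w t)"
    unfolding split by (rule sum.union_disjoint) (use d in auto)
  have s5: "(\<Sum>t\<in>{a..n}. w t * e1) = (\<Sum>t\<in>{a..n}. w t) * e1"
    by (simp add: sum_distrib_right)
  have s6: "(1 - e1) * (\<Sum>t=a..n. w t) = (\<Sum>t=a..n. w t) - (\<Sum>t\<in>{a..n}. w t) * e1"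
    by (simp add: algebra_simps)
  from s1 s2 s3 s4 s5 s6 show ?thesis unfolding e_def[symmetric] e1_def[symmetric] by linarith
qed

lemma key2:
  fixes r :: "nat \<Rightarrow> real" and Q :: "real poly"
  assumes R: "0 < R" and AB: "\<And>t. 1 \<le> t \<Longrightarrow> A1 \<le> real t * r t \<and> real t * r t \<le> A2"
    and A1: "0 < A1"
    and n: "1 \<le> n" and k: "2 \<le> k" "k \<le> n" and L: "L = ln (real n) + 1"
    and beta: "\<beta> = A1 / (2 * A2)" and y: "y = \<beta> * (real k - 1) / L" and x: "1 < x" "exp 3 * x \<le> y"
    and F: "F = (\<Sum>t\<in>{1..n}. r t / R)"
    and Q: "\<And>z. poly Q z = (\<Sum>t\<in>{1..n}. r t / R * z ^ t) ^ (k - 1)"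
    and Qnn: "\<And>i. 0 \<le> coeff Q i"
  shows "(\<Sum>i\<le>n. coeff Q i) \<le> F ^ (k - 1) * exp (- x * ln x)"
proof -
  have rpos: "1 \<le> t \<Longrightarrow> 0 < r t" for t using AB[of t] A1
    by (smt (verit) of_nat_0_less_iff zero_less_mult_pos not_one_le_zero le_zero_eq linorder_not_le)
  have A12: "A1 \<le> A2" using AB[of 1] by simp
  have A2: "0 < A2" using A1 A12 by simp
  have Lge: "1 \<le> L" using L n by simp
  have bpos: "0 < \<beta>" using beta A1 A2 by simp
  have bhalf: "\<beta> \<le> 1/2"
  proof -
    have "A1 / (2 * A2) \<le> A2 / (2 * A2)" using A12 A2 by (intro divide_right_mono) auto
    also have "A2 / (2 * A2) = 1/2" using A2 by simp
    finally show ?thesis unfolding beta .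
  qed
  have e3: "1 \<le> exp (3::real)" by simp
  have "1 * x \<le> exp 3 * x" using x e3 by (intro mult_right_mono) auto
  then have xy: "x \<le> y" using x by linarith
  have y1: "1 < y" using xy x by simp
  have yk: "y \<le> real k - 1"
  proof -
    have "y \<le> \<beta> * (real k - 1)" unfolding y using Lge bpos k by (simp add: divide_le_eq mult_le_cancel_left_pos)
    also have "\<dots> \<le> real k - 1" using bhalf bpos k by (intro mult_left_le_one_le) auto
    finally show ?thesis .
  qed
  have yn: "y \<le> real n" using yk k by simp
  have ypos: "0 < y" using y1 by simp
  define a where "a = nat \<lceil>real n / y\<rceil>"
  have ny1: "1 \<le> real n / y" using yn ypos by (simp add: field_simps)
  have a_eq: "real a = real_of_int \<lceil>real n / y\<rceil>" unfolding a_def using ny1 by simp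
  have a_ge: "real n / y \<le> real a" unfolding a_eq by linarith
  have a_lt: "real a < real n / y + 1" unfolding a_eq by linarith
  have a1: "1 \<le> a" using a_ge ny1 by linarith
  have an: "a \<le> n"
  proof -
    have "real n / y \<le> real n" using y1 n by (simp add: field_simps)
    then have "\<lceil>real n / y\<rceil> \<le> int n" by (metis ceiling_le of_int_of_nat_eq)
    then show ?thesis unfolding a_def by (simp only: nat_le_iff)
  qed
  define \<sigma> where "\<sigma> = real n / real a"
  have apos: "0 < real a" using a1 by simp
  have s_le: "\<sigma> \<le> y" unfolding \<sigma>_def using a_ge apos ypos by (simp add: field_simps)
  have s_ge: "y / 2 \<le> \<sigma>"
  proof -
    have "real a \<le> 2 * (real n / y)" using a_lt ny1 by simp
    then show ?thesis unfolding \<sigma>_def using apos ypos by (simp add: field_simps)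
  qed
  have s1: "1 < \<sigma>" using s_ge y1 x xy e3 (* y >= e^3 > 2 *)
  proof -
    have "exp (3::real) \<ge> 3 + 1" using exp_ge_add_one_self[of 3] by simp
    then have "4 * 1 < exp 3 * x" using x(1) by (intro mult_le_less_imp_less) auto
    then have "4 < y" using x(2) by linarith
    then show ?thesis using s_ge by simp
  qed
  have lns: "0 \<le> ln \<sigma>" using s1 by simp
  define z where "z = exp (- 1 / real a)"
  have z: "0 < z" "z \<le> 1" unfolding z_def using apos by auto
  define \<psi> where "\<psi> = (\<Sum>t\<in>{1..n}. r t / R * z ^ t)"
  have psi_nn: "0 \<le> \<psi>" unfolding \<psi>_def using rpos R z by (intro sum_nonneg) (auto intro: less_imp_le)
  define Sa where "Sa = (\<Sum>t=a..n. r t / R)"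
  have pb: "\<psi> \<le> F - (1 - exp (-1)) * Sa"
    unfolding \<psi>_def F Sa_def z_def
    by (rule psi_bound) (use rpos R a1 an in \<open>auto intro: less_imp_le\<close>)
  have Sa_ge: "A1 / R * ln \<sigma> \<le> Sa"
  proof -
    have "ln \<sigma> \<le> ln (real (n + 1) / real a)"
      unfolding \<sigma>_def using apos n by (subst ln_le_cancel_iff) (auto simp: divide_right_mono)
    also have "\<dots> \<le> (\<Sum>t=a..n. 1 / real t)" by (rule harm_lower) (use a1 an in auto)
    finally have "A1 / R * ln \<sigma> \<le> A1 / R * (\<Sum>t=a..n. 1 / real t)"
      using A1 R by (intro mult_left_mono) auto
    also have "\<dots> = (\<Sum>t=a..n. A1 / real t / R)" by (simp add: sum_distrib_left mult.commute)
    also have "\<dots> \<le> Sa" unfolding Sa_def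
    proof (intro sum_mono divide_right_mono)
      fix t assume "t \<in> {a..n}"
      then have t: "1 \<le> t" using a1 by auto
      then show "A1 / real t \<le> r t" using AB[of t] by (simp add: divide_le_eq mult.commute)
    qed (use R in auto)
    finally show ?thesis .
  qed
  have F_le: "F \<le> A2 / R * L"
  proof -
    have "F \<le> (\<Sum>t\<in>{1..n}. A2 / real t / R)" unfolding F
    proof (intro sum_mono divide_right_mono)
      fix t assume "t \<in> {1..n}"
      then have t: "1 \<le> t" by auto
      then show "r t \<le> A2 / real t" using AB[of t] by (simp add: le_divide_eq mult.commute)
    qed (use R in auto)
    also have "\<dots> = A2 / R * (\<Sum>t\<in>{1..n}. 1 / real t)" by (simp add: sum_distrib_left mult.commute)
    also have "\<dots> \<le> A2 / R * L" unfolding L using harm_upper[OF n] A2 R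
      by (intro mult_left_mono) auto
    finally show ?thesis .
  qed
  have Fpos: "0 < F" unfolding F
  proof -
    have "0 < r 1 / R" using rpos[of 1] R by simp
    also have "\<dots> \<le> (\<Sum>t\<in>{1..n}. r t / R)"
      by (rule member_le_sum) (use n rpos R in \<open>auto intro: less_imp_le\<close>)
    finally show "0 < (\<Sum>t\<in>{1..n}. r t / R)" .
  qed
  define u where "u = \<beta> * ln \<sigma> / L"
  have e1: "exp (-1::real) \<le> 1/2"
  proof -
    have "2 \<le> exp (1::real)" using exp_ge_add_one_self[of 1] by simp
    then show ?thesis by (simp add: exp_minus field_simps)
  qed
  have pu: "\<psi> \<le> F * (1 - u)"
  proof -
    have "F * u = \<beta> * ln \<sigma> * (F / L)" unfolding u_def by simp
    also have "\<dots> \<le> \<beta> * ln \<sigma> * (A2 / R)"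
      using F_le Lge bpos lns by (intro mult_left_mono) (auto simp: divide_le_eq)
    also have "\<dots> = 1/2 * (A1 / R * ln \<sigma>)" unfolding beta using A2 by simp
    also have "\<dots> \<le> (1 - exp (-1)) * Sa"
      using Sa_ge e1 lns A1 R by (intro mult_mono) auto
    finally show ?thesis using pb by (simp add: algebra_simps)
  qed
  have ratio: "\<psi> / F \<le> exp (- u)"
  proof -
    have "\<psi> / F \<le> 1 - u" using pu Fpos by (simp add: divide_le_eq mult.commute)
    also have "1 - u \<le> exp (- u)" using exp_ge_add_one_self[of "-u"] by simp
    finally show ?thesis .
  qed
  have pow: "(\<psi> / F) ^ (k - 1) \<le> exp (- (y * ln \<sigma>))"
  proof -
    have "(\<psi> / F) ^ (k - 1) \<le> exp (- u) ^ (k - 1)"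
      using ratio psi_nn Fpos by (intro power_mono) auto
    also have "\<dots> = exp (- (real (k - 1) * u))" by (simp add: exp_of_nat_mult[symmetric])
    also have "real (k - 1) * u = y * ln \<sigma>" unfolding u_def y using k by simp
    finally show ?thesis .
  qed
  have zn: "1 / z ^ n = exp \<sigma>"
    unfolding z_def \<sigma>_def by (simp add: exp_of_nat_mult[symmetric] exp_minus field_simps)
  have pQ: "poly Q z = F ^ (k - 1) * (\<psi> / F) ^ (k - 1)"
    unfolding Q \<psi>_def[symmetric] using Fpos by (simp add: power_divide)
  have "(\<Sum>i\<le>n. coeff Q i) \<le> poly Q z / z ^ n" by (rule sum_le_poly[OF Qnn z])
  also have "\<dots> = F ^ (k - 1) * ((\<psi> / F) ^ (k - 1) * (1 / z ^ n))"
    unfolding pQ by simp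
  also have "\<dots> = F ^ (k - 1) * ((\<psi> / F) ^ (k - 1) * exp \<sigma>)" unfolding zn ..
  also have "\<dots> \<le> F ^ (k - 1) * (exp (- (y * ln \<sigma>)) * exp \<sigma>)"
    using pow Fpos by (intro mult_left_mono mult_right_mono) auto
  also have "exp (- (y * ln \<sigma>)) * exp \<sigma> = exp (\<sigma> - y * ln \<sigma>)" by (simp add: exp_add[symmetric])
  also have "\<dots> \<le> exp (- x * ln x)"
    using exponent_bound[of x y \<sigma>] x s_ge s_le by simp
  finally show ?thesis using Fpos by simp
qed

theorem mainTheorem4:
  fixes r :: "nat \<Rightarrow> real" and a :: real
  assumes a_pos: "0 < a"
    and r_pos: "\<And>n. n \<ge> 1 \<Longrightarrow> 0 < r n"
    and r_asymp: "r \<sim>[at_top] (\<lambda>n. a / real n)"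
  shows "\<exists>C::real. \<exists>c::real. 0 < C \<and> 0 < c \<and> c < 1 \<and>
    (\<forall>N k n. 1 \<le> N \<longrightarrow> 1 \<le> k \<longrightarrow> 1 \<le> n \<longrightarrow> n \<le> N \<longrightarrow>
       pmf (tau_pmf r N k) n
         \<le> C * real k * pmf (T_pmf r N) n
             * (measure_pmf.prob (T_pmf r N) {..n}) ^ (k - 1)
             * exp (- (c * real k / (ln (real n) + 1))
                    * logplus (c * real k / (ln (real n) + 1))))"
proof -
  obtain A1 A2 where A1: "0 < A1" and AB0: "\<forall>t\<ge>1. A1 \<le> real t * r t \<and> real t * r t \<le> A2"
    using r_bounds[OF a_pos r_pos r_asymp] by blast
  have AB: "\<And>t. 1 \<le> t \<Longrightarrow> A1 \<le> real t * r t \<and> real t * r t \<le> A2" using AB0 by blast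
  have A12: "A1 \<le> A2" using AB[of 1] by simp
  have A2: "0 < A2" using A1 A12 by simp
  define \<beta> where "\<beta> = A1 / (2 * A2)"
  define c where "c = \<beta> / (2 * exp 3)"
  define C where "C = A2 / A1"
  have bpos: "0 < \<beta>" unfolding \<beta>_def using A1 A2 by simp
  have bhalf: "\<beta> \<le> 1/2"
  proof -
    have "A1 / (2 * A2) \<le> A2 / (2 * A2)" using A12 A2 by (intro divide_right_mono) auto
    also have "A2 / (2 * A2) = 1/2" using A2 by simp
    finally show ?thesis unfolding \<beta>_def .
  qed
  have cpos: "0 < c" unfolding c_def using bpos by simp
  have c1: "c < 1"
  proof -
    have "1 \<le> exp (3::real)" by simp
    then have "\<beta> / (2 * exp 3) \<le> \<beta> / 2" using bpos by (intro divide_left_mono) auto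
    moreover have "\<beta> / 2 < 1" using bhalf by simp
    ultimately show ?thesis unfolding c_def by linarith
  qed
  have Cpos: "0 < C" unfolding C_def using A1 A2 by simp
  have main: "pmf (tau_pmf r N k) n
         \<le> C * real k * pmf (T_pmf r N) n
             * (measure_pmf.prob (T_pmf r N) {..n}) ^ (k - 1)
             * exp (- (c * real k / (ln (real n) + 1))
                    * logplus (c * real k / (ln (real n) + 1)))"
    if N: "1 \<le> N" and k: "1 \<le> k" and n: "1 \<le> n" and nN: "n \<le> N" for N k n
  proof -
    define R where "R = RN r N"
    have R: "0 < R" unfolding R_def by (rule RN_pos[OF r_pos N])
    define P where "P = Pn r N n"
    have pT: "pmf (T_pmf r N) t = (if t \<in> {1..N} then r t / R else 0)" for t
      unfolding R_def by (rule pmf_T[OF r_pos N])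
    define F where "F = (\<Sum>t\<in>{1..n}. r t / R)"
    have Fprob: "measure_pmf.prob (T_pmf r N) {..n} = F"
    proof -
      have "measure_pmf.prob (T_pmf r N) {..n} = (\<Sum>t\<in>{..n}. pmf (T_pmf r N) t)"
        by (rule measure_measure_pmf_finite) simp
      also have "\<dots> = (\<Sum>t\<in>{0..n}. pmf (T_pmf r N) t)" by (simp add: atLeast0AtMost)
      also have "\<dots> = pmf (T_pmf r N) 0 + (\<Sum>t\<in>{Suc 0..n}. pmf (T_pmf r N) t)"
        by (rule sum.atLeast_Suc_atMost) simp
      also have "\<dots> = F" unfolding F_def pT using nN by (auto intro!: sum.cong)
      finally show ?thesis .
    qed
    have Fnn: "0 \<le> F" unfolding F_def using r_pos R by (intro sum_nonneg) (auto intro: less_imp_le)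
    have cP: "coeff P t = (if t \<in> {1..n} then r t / R else 0)" for t
      unfolding P_def R_def by (rule coeff_Pn)
    have cPnn: "0 \<le> coeff P t" for t unfolding cP using r_pos R by (auto intro: less_imp_le)
    have D: "pmf (tau_pmf r N k) n = coeff (P ^ k) n"
      unfolding P_def using tau_coeff[OF r_pos N nN, where m=n and k=k] by simp
    define L where "L = ln (real n) + 1"
    have Lge: "1 \<le> L" unfolding L_def using n by simp
    define x where "x = c * real k / L"
    have xpos: "0 < x" unfolding x_def using cpos k Lge by simp
    define E where "E = exp (- x * logplus x)"
    have Epos: "0 < E" unfolding E_def by simp
    have rn: "A1 / real n \<le> r n" using AB[OF n] n by (simp add: divide_le_eq mult.commute)
    have goal_eq: "C * real k * pmf (T_pmf r N) n * (measure_pmf.prob (T_pmf r N) {..n}) ^ (k - 1)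
             * exp (- (c * real k / (ln (real n) + 1)) * logplus (c * real k / (ln (real n) + 1)))
           = C * real k * (r n / R) * F ^ (k - 1) * E"
      unfolding Fprob pT E_def x_def L_def using n nN by simp
    show ?thesis
    proof (cases "n < k")
      case True
      have "coeff (P ^ k) n = 0" by (rule coeff_pow_low) (use cP True in auto)
      moreover have "0 \<le> C * real k * (r n / R) * F ^ (k - 1) * E"
        using Cpos r_pos[OF n] R Fnn Epos by (intro mult_nonneg_nonneg) auto
      ultimately show ?thesis unfolding goal_eq D by simp
    next
      case False
      then have kn: "k \<le> n" by simp
      define S where "S = (\<Sum>i\<le>n. coeff (P ^ (k - 1)) i)"
      have Snn: "0 \<le> S" unfolding S_def by (intro sum_nonneg coeff_pow_nonneg cPnn)
      have key1: "real n * coeff (P ^ k) n \<le> real k * (A2 / R) * S"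
      proof -
        have kk: "Suc (k - 1) = k" using k by simp
        have "real n * coeff (P ^ k) n
           = real k * (\<Sum>i\<le>n-1. coeff (P ^ (k-1)) i * (real (n - i) * coeff P (n - i)))"
          using size_bias[OF n, of P "k - 1"] unfolding kk .
        also have "(\<Sum>i\<le>n-1. coeff (P ^ (k-1)) i * (real (n - i) * coeff P (n - i)))
                 \<le> (\<Sum>i\<le>n-1. coeff (P ^ (k-1)) i * (A2 / R))"
        proof (intro sum_mono mult_left_mono coeff_pow_nonneg cPnn)
          fix i assume "i \<in> {..n-1}"
          then have i: "1 \<le> n - i" "n - i \<le> n" using n by auto
          have "real (n - i) * coeff P (n - i) = real (n - i) * r (n - i) / R"
            unfolding cP using i by simp
          also have "\<dots> \<le> A2 / R" using AB[OF i(1)] R by (intro divide_right_mono) auto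
          finally show "real (n - i) * coeff P (n - i) \<le> A2 / R" .
        qed
        also have "\<dots> = (A2 / R) * (\<Sum>i\<le>n-1. coeff (P ^ (k-1)) i)"
          by (simp add: sum_distrib_left mult.commute)
        also have "\<dots> \<le> (A2 / R) * S" unfolding S_def using A2 R
          by (intro mult_left_mono sum_mono2) (auto intro: coeff_pow_nonneg cPnn)
        finally show ?thesis using k by (simp add: mult_left_mono mult.assoc)
      qed
      have key2: "S \<le> F ^ (k - 1) * E"
      proof (cases "x \<le> 1")
        case True
        have "logplus x = 0" unfolding logplus_def using True xpos by (simp add: max_def)
        then have E1: "E = 1" unfolding E_def by simp
        have "S \<le> poly (P ^ (k - 1)) 1 / 1 ^ n" unfolding S_def
          by (rule sum_le_poly) (auto intro: coeff_pow_nonneg cPnn)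
        also have "\<dots> = F ^ (k - 1)" unfolding P_def poly_power poly_Pn F_def R_def by simp
        finally show ?thesis unfolding E1 by simp
      next
        case False
        then have x1: "1 < x" by simp
        have k2: "2 \<le> k"
        proof (rule ccontr)
          assume "\<not> 2 \<le> k" then have "k = 1" using k by simp
          then have "x \<le> c" unfolding x_def using Lge cpos by (simp add: divide_le_eq)
          then show False using x1 c1 by simp
        qed
        have lp: "logplus x = ln x" unfolding logplus_def using x1 by simp
        define y where "y = \<beta> * (real k - 1) / L"
        have xy: "exp 3 * x \<le> y"
        proof -
          have "exp 3 * x = \<beta> * real k / 2 / L" unfolding x_def c_def by simp
          also have "\<dots> \<le> \<beta> * (real k - 1) / L" using bpos Lge k2
            by (intro divide_right_mono) (auto simp: field_simps)
          finally show ?thesis unfolding y_def .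
        qed
        have "S \<le> F ^ (k - 1) * exp (- x * ln x)" unfolding S_def
        proof (rule key2[OF R AB A1 n k2 kn L_def \<beta>_def y_def x1 xy F_def])
          show "poly (P ^ (k - 1)) z = (\<Sum>t\<in>{1..n}. r t / R * z ^ t) ^ (k - 1)" for z
            unfolding P_def poly_power poly_Pn R_def ..
          show "0 \<le> coeff (P ^ (k - 1)) i" for i by (intro coeff_pow_nonneg cPnn)
        qed
        then show ?thesis unfolding E_def lp .
      qed
      have "coeff (P ^ k) n \<le> real k * (A2 / R) * S / real n"
        using key1 n by (subst pos_le_divide_eq) (auto simp: mult.commute)
      also have "\<dots> \<le> real k * (A2 / R) * (F ^ (k - 1) * E) / real n"
        using key2 A2 R n by (intro divide_right_mono mult_left_mono) auto
      also have "\<dots> = real k * (A2 / real n / R) * F ^ (k - 1) * E" by (simp add: mult_ac)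
      also have "\<dots> \<le> real k * (C * r n / R) * F ^ (k - 1) * E"
      proof -
        have "A2 / real n = C * (A1 / real n)" unfolding C_def using A1 by simp
        also have "\<dots> \<le> C * r n" using rn Cpos by (intro mult_left_mono) auto
        finally have "A2 / real n / R \<le> C * r n / R" using R by (intro divide_right_mono) auto
        then show ?thesis using Fnn Epos by (intro mult_right_mono mult_left_mono) auto
      qed
      also have "\<dots> = C * real k * (r n / R) * F ^ (k - 1) * E" by simp
      finally show ?thesis unfolding goal_eq D .
    qed
  qed
  show ?thesis using Cpos cpos c1 main by blast
qed

end
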